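(* For a word $\tau=(a_0,\ldots,a_{L-1})$ of positive integers define its carry constant $C(\tau)=\sum_{j=0}^{L-1}3^{L-1-j}2^{a_0+\cdots+a_{j-1}}$. Let $\sigma=(k_0,\ldots,k_{\ell-1})$ be a word of positive integers, let $C_\ell=C(\sigma)$, and for $1\le s\le\ell-1$ let $\sigma^{\langle s\rangle}=(k_s,k_{s+1},\ldots,k_{\ell-1},k_0,\ldots,k_{s-1})$ be its cyclic rotation starting at index $s$, with $C^{\langle s\rangle}=C(\sigma^{\langle s\rangle})$. Let $m\ge 1$ and suppose $\delta_s:=v_2\bigl(C^{\langle s\rangle}-C_\ell\bigr)\ge m$. Let $r$ be the largest integer with $0\le r\le\ell$ such that $\sum_{j=0}^{r-1}k_j<m$. Then $k_j=k_{(j+s)\bmod\ell}$ for all $0\le j<r$.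
   Context: $v_2$ is the $2$-adic valuation, with $v_2(0)=+\infty$. Empty sums are $0$. *)

theory Defs
  imports "HOL-Computational_Algebra.Computational_Algebra" "HOL-Library.Extended_Nat"
begin

definition v2 :: "int \<Rightarrow> enat" where
  "v2 x = (if x = 0 then \<infinity> else enat (multiplicity (2::int) x))"

definition carry :: "nat list \<Rightarrow> int" where
  "carry \<tau> = (\<Sum>j<length \<tau>. 3 ^ (length \<tau> - 1 - j) * 2 ^ (\<Sum>i<j. \<tau> ! i))"

definition rot :: "nat \<Rightarrow> nat list \<Rightarrow> nat list" where
  "rot s \<sigma> = drop s \<sigma> @ take s \<sigma>"

end

theory Submission
  imports Defs
begin

lemma middle_not_dvd:
  fixes x y k :: nat
  assumes "x < y"
  shows "\<not> (2::int) ^ (x + 1) dvd 3 ^ k * (2 ^ y - 2 ^ x)"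
proof
  assume h: "(2::int) ^ (x + 1) dvd 3 ^ k * (2 ^ y - 2 ^ x)"
  obtain d where d: "y = x + d" "d > 0" using assms by (metis less_imp_add_positive)
  have "(3::int) ^ k * (2 ^ y - 2 ^ x) = 2 ^ x * (3 ^ k * (2 ^ d - 1))"
    by (simp add: d power_add algebra_simps)
  with h have "(2::int) ^ x * 2 dvd 2 ^ x * (3 ^ k * (2 ^ d - 1))" by simp
  hence "(2::int) dvd 3 ^ k * (2 ^ d - 1)" by (subst (asm) dvd_mult_cancel_left) simp
  thus False using d(2) by simp
qed

lemma middle_not_dvd':
  fixes x y k :: nat
  assumes "x \<noteq> y"
  shows "\<not> (2::int) ^ (min x y + 1) dvd 3 ^ k * (2 ^ y - 2 ^ x)"
proof (cases "x < y")
  case True thus ?thesis using middle_not_dvd by simp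
next
  case False
  hence "y < x" using assms by simp
  hence "\<not> (2::int) ^ (y + 1) dvd 3 ^ k * (2 ^ x - 2 ^ y)" using middle_not_dvd by blast
  moreover have "(3::int) ^ k * (2 ^ y - 2 ^ x) = - (3 ^ k * (2 ^ x - 2 ^ y))" by (simp add: algebra_simps)
  ultimately show ?thesis using \<open>y < x\<close> by simp
qed

lemma carry_split:
  assumes "length u = L" "k < L"
  shows "carry u = (\<Sum>j<k. 3 ^ (L - 1 - j) * 2 ^ (\<Sum>i<j. u ! i))
     + 3 ^ (L - 1 - k) * 2 ^ (\<Sum>i<k. u ! i)
     + (\<Sum>j\<in>{Suc k..<L}. 3 ^ (L - 1 - j) * 2 ^ (\<Sum>i<j. u ! i))"
proof -
  let ?f = "\<lambda>j. (3::int) ^ (L - 1 - j) * 2 ^ (\<Sum>i<j. u ! i)"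
  have "carry u = sum ?f {0..<L}" unfolding carry_def using assms(1) by (simp add: lessThan_atLeast0)
  also have "\<dots> = sum ?f {0..<k} + sum ?f {k..<L}"
    using assms(2) by (simp add: sum.atLeastLessThan_concat)
  also have "sum ?f {k..<L} = ?f k + sum ?f {Suc k..<L}"
    using assms(2) by (simp add: sum.atLeast_Suc_lessThan)
  finally show ?thesis by (simp add: lessThan_atLeast0 add.assoc)
qed

lemma prefix_mono:
  fixes u :: "nat list"
  assumes "\<forall>x\<in>set u. x > 0" "j \<le> length u" "Suc k < j"
  shows "(\<Sum>i<Suc k. u ! i) + 1 \<le> (\<Sum>i<j. u ! i)"
proof -
  have "(\<Sum>i<Suc (Suc k). u ! i) \<le> (\<Sum>i<j. u ! i)"
    using assms(3) by (intro sum_mono2) auto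
  moreover have "u ! Suc k > 0" using assms by (auto simp: nth_mem)
  ultimately show ?thesis by simp
qed

lemma arith_lem: "((Aw::int) + a * x + Rw) - (Aw + a * y + Ru) = a * (x - y) + (Rw - Ru)"
  by (simp add: algebra_simps)

lemma key:
  fixes u w :: "nat list"
  assumes lu: "length u = L" and lw: "length w = L"
    and pu: "\<forall>x\<in>set u. x > 0" and pw: "\<forall>x\<in>set w. x > 0"
    and tL: "Suc t < L" and eq: "\<forall>j<t. u ! j = w ! j" and ne: "u ! t \<noteq> w ! t"
    and dv: "(2::int) ^ (min (\<Sum>i<Suc t. u ! i) (\<Sum>i<Suc t. w ! i) + 1) dvd (carry w - carry u)"
  shows False
proof -
  define a where "a = min (\<Sum>i<Suc t. u ! i) (\<Sum>i<Suc t. w ! i)"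
  have Peq: "(\<Sum>i<j. u ! i) = (\<Sum>i<j. w ! i)" if "j \<le> t" for j
    using eq that by (intro sum.cong) auto
  have Pne: "(\<Sum>i<Suc t. u ! i) \<noteq> (\<Sum>i<Suc t. w ! i)"
    using Peq[of t] ne by simp
  have A: "(\<Sum>j<Suc t. (3::int) ^ (L - 1 - j) * 2 ^ (\<Sum>i<j. u ! i))
         = (\<Sum>j<Suc t. 3 ^ (L - 1 - j) * 2 ^ (\<Sum>i<j. w ! i))"
    using Peq by (intro sum.cong) auto
  have B: "(2::int) ^ (a + 1) dvd (\<Sum>j\<in>{Suc (Suc t)..<L}. 3 ^ (L - 1 - j) * 2 ^ (\<Sum>i<j. v ! i))"
    if "v = u \<or> v = w" for v
  proof (rule dvd_sum)
    fix j assume j: "j \<in> {Suc (Suc t)..<L}"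
    have "length v = L" "\<forall>x\<in>set v. x > 0" using that lu lw pu pw by auto
    hence "(\<Sum>i<Suc t. v ! i) + 1 \<le> (\<Sum>i<j. v ! i)"
      using j by (intro prefix_mono) auto
    moreover have "a \<le> (\<Sum>i<Suc t. v ! i)" using that a_def by auto
    ultimately have "(2::int) ^ (a + 1) dvd 2 ^ (\<Sum>i<j. v ! i)"
      by (intro le_imp_power_dvd) simp
    thus "(2::int) ^ (a + 1) dvd 3 ^ (L - 1 - j) * 2 ^ (\<Sum>i<j. v ! i)" by simp
  qed
  have D: "carry w - carry u =
      (3 ^ (L - 1 - Suc t) * (2 ^ (\<Sum>i<Suc t. w ! i) - 2 ^ (\<Sum>i<Suc t. u ! i)))
      + ((\<Sum>j\<in>{Suc (Suc t)..<L}. 3 ^ (L - 1 - j) * 2 ^ (\<Sum>i<j. w ! i))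
        - (\<Sum>j\<in>{Suc (Suc t)..<L}. 3 ^ (L - 1 - j) * 2 ^ (\<Sum>i<j. u ! i)))"
    unfolding carry_split[OF lu tL] carry_split[OF lw tL] A by (rule arith_lem)
  have "(2::int) ^ (a + 1) dvd
      ((\<Sum>j\<in>{Suc (Suc t)..<L}. 3 ^ (L - 1 - j) * 2 ^ (\<Sum>i<j. w ! i))
        - (\<Sum>j\<in>{Suc (Suc t)..<L}. 3 ^ (L - 1 - j) * 2 ^ (\<Sum>i<j. u ! i)))"
    using B[of w] B[of u] by (intro dvd_diff) auto
  with dv D have "(2::int) ^ (a + 1) dvd 3 ^ (L - 1 - Suc t) * (2 ^ (\<Sum>i<Suc t. w ! i) - 2 ^ (\<Sum>i<Suc t. u ! i))"
    unfolding a_def by (simp only: dvd_add_left_iff)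
  thus False using middle_not_dvd'[OF Pne] unfolding a_def by blast
qed

theorem mainTheorem19:
  fixes \<sigma> :: "nat list" and s m r :: nat
  assumes pos: "\<forall>k \<in> set \<sigma>. k > 0"
    and s_range: "1 \<le> s" "s \<le> length \<sigma> - 1"
    and m_pos: "m \<ge> 1"
    and delta: "v2 (carry (rot s \<sigma>) - carry \<sigma>) \<ge> enat m"
    and r_def: "r = (GREATEST r. r \<le> length \<sigma> \<and> (\<Sum>j<r. \<sigma> ! j) < m)"
  shows "\<forall>j<r. \<sigma> ! j = \<sigma> ! ((j + s) mod length \<sigma>)"
proof -
  define L where "L = length \<sigma>"
  define \<tau> where "\<tau> = rot s \<sigma>"
  have L2: "L \<ge> 2" "s < L" using s_range L_def by auto
  have lt: "length \<tau> = L" unfolding \<tau>_def rot_def L_def using L2 L_def by simp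
  have tnth: "\<tau> ! j = \<sigma> ! ((j + s) mod L)" if "j < L" for j
  proof (cases "j < L - s")
    case True
    hence "(j + s) mod L = s + j" by simp
    thus ?thesis using True L2 unfolding \<tau>_def rot_def L_def by (simp add: nth_append add.commute)
  next
    case False
    hence "(j + s) mod L = j - (L - s)" using that L2
      by (simp add: mod_if) 
    thus ?thesis using False that L2 unfolding \<tau>_def rot_def L_def by (simp add: nth_append)
  qed
  have pt: "\<forall>x\<in>set \<tau>. x > 0" using pos unfolding \<tau>_def rot_def
    by (metis Un_iff append_take_drop_id set_append)
  have sumeq: "(\<Sum>i<L. \<tau> ! i) = (\<Sum>i<L. \<sigma> ! i)"
  proof -
    have "(\<Sum>i<L. \<tau> ! i) = sum_list \<tau>" using lt by (simp add: sum_list_sum_nth lessThan_atLeast0)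
    also have "\<dots> = sum_list \<sigma>" unfolding \<tau>_def rot_def
      by (metis add.commute append_take_drop_id sum_list_append)
    also have "\<dots> = (\<Sum>i<L. \<sigma> ! i)" using L_def by (simp add: sum_list_sum_nth lessThan_atLeast0)
    finally show ?thesis .
  qed
  let ?P = "\<lambda>r. r \<le> length \<sigma> \<and> (\<Sum>j<r. \<sigma> ! j) < m"
  have "?P r" unfolding r_def
    by (rule GreatestI_nat[where k=0 and b="length \<sigma>"]) (use m_pos in auto)
  hence rL: "r \<le> L" and rm: "(\<Sum>j<r. \<sigma> ! j) < m" using L_def by auto
  show ?thesis
  proof (rule ccontr)
    assume "\<not> ?thesis"
    then obtain j0 where j0: "j0 < r" "\<sigma> ! j0 \<noteq> \<sigma> ! ((j0 + s) mod length \<sigma>)" by auto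
    hence "\<exists>j. j < r \<and> \<sigma> ! j \<noteq> \<tau> ! j" using tnth[of j0] rL L_def by auto
    then obtain t where t: "t < r" "\<sigma> ! t \<noteq> \<tau> ! t" and tmin: "\<forall>j<t. \<sigma> ! j = \<tau> ! j"
      using exists_least_iff[of "\<lambda>j. j < r \<and> \<sigma> ! j \<noteq> \<tau> ! j"] by (metis order.strict_trans)
    have Peq: "(\<Sum>i<t. \<sigma> ! i) = (\<Sum>i<t. \<tau> ! i)" using tmin by (intro sum.cong) auto
    show False
    proof (cases "Suc t < L")
      case False
      hence "Suc t = L" using t rL by simp
      thus False using sumeq Peq t(2) by (metis add_left_cancel sum.lessThan_Suc)
    next
      case True
      have "(\<Sum>i<Suc t. \<sigma> ! i) \<le> (\<Sum>j<r. \<sigma> ! j)" by (rule sum_mono2) (use t in auto)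
      hence am: "min (\<Sum>i<Suc t. \<sigma> ! i) (\<Sum>i<Suc t. \<tau> ! i) + 1 \<le> m" using rm by linarith
      have "carry \<tau> - carry \<sigma> \<noteq> 0 \<Longrightarrow> (2::int) ^ m dvd (carry \<tau> - carry \<sigma>)"
      proof -
        assume nz: "carry \<tau> - carry \<sigma> \<noteq> 0"
        hence "m \<le> multiplicity 2 (carry \<tau> - carry \<sigma>)"
          using delta unfolding v2_def \<tau>_def by simp
        hence "(2::int) ^ m dvd 2 ^ multiplicity 2 (carry \<tau> - carry \<sigma>)" by (rule le_imp_power_dvd)
        thus ?thesis using multiplicity_dvd dvd_trans by blast
      qed
      hence "(2::int) ^ m dvd (carry \<tau> - carry \<sigma>)" by fastforce
      hence "(2::int) ^ (min (\<Sum>i<Suc t. \<sigma> ! i) (\<Sum>i<Suc t. \<tau> ! i) + 1) dvd (carry \<tau> - carry \<sigma>)"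
        using am le_imp_power_dvd dvd_trans by blast
      thus False using key[OF L_def[symmetric] lt pos pt True tmin t(2)] by blast
    qed
  qed
qed

end
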